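(* Let $A$ be a combinatorially rich set in $(\mathbb{N},+)$. Then (1) $A$ contains a family of $2^\omega$ almost disjoint subsets each of which is combinatorially rich; and (2) $A$ can be split into $\omega$ pairwise disjoint subsets each of which is combinatorially rich.
   Context: $\mathbb{N}=\{1,2,\dots\}$. For $n\in\mathbb{N}$ and a set $X$, $\mathcal{P}_n(X)$ is the set of $n$-element subsets of $X$, and ${}^mX$ is the set of sequences of length $m$ in $X$. For a commutative semigroup $(S,+)$, $L\in\mathcal{P}_n({}^mS)$, $a\in S$ and nonempty $H\subseteq\{1,\dots,m\}$, put $S_L(a,H)=\{a+\sum_{t\in H}f(t): f\in L\}$. A set $A\subseteq S$ is combinatorially rich if there is a sequence $\langle r_n\rangle_{n=1}^\infty$ in $\mathbb{N}$ such that for each $n\in\mathbb{N}$ and each $L\in\mathcal{P}_n({}^{r_n}S)$ there exist $a\in S$ and nonempty $H\subseteq\{1,\dots,r_n\}$ with $S_L(a,H)\subseteq A$. For an infinite set $X$, a family of almost disjoint subsets of $X$ is a family of subsets of $X$ each of cardinality $|X|$ such that any two distinct members intersect in a set of cardinality less than $|X|$. *)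

theory Defs
  imports Main "HOL-Library.FuncSet" "HOL-Library.Equipollence"
begin

text \<open>Sequences of length m in S: extensional functions {1..m} -> S.
  S_L(a,H) for L a set of such sequences.\<close>
definition S_L :: "(nat \<Rightarrow> 'a::comm_monoid_add) set \<Rightarrow> 'a \<Rightarrow> nat set \<Rightarrow> 'a set" where
  "S_L L a H = {a + (\<Sum>t\<in>H. f t) | f. f \<in> L}"

text \<open>Combinatorial richness of A inside the commutative semigroup with carrier S.
  Sums are only taken over nonempty H, so the monoid structure is only notational.\<close>
definition comb_rich :: "'a::comm_monoid_add set \<Rightarrow> 'a set \<Rightarrow> bool" where
  "comb_rich S A \<longleftrightarrow> A \<subseteq> S \<and>
     (\<exists>r :: nat \<Rightarrow> nat. (\<forall>n\<ge>1. r n \<ge> 1) \<and>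
        (\<forall>n\<ge>1. \<forall>L. L \<subseteq> ({1..r n} \<rightarrow>\<^sub>E S) \<and> finite L \<and> card L = n \<longrightarrow>
            (\<exists>a\<in>S. \<exists>H. H \<subseteq> {1..r n} \<and> H \<noteq> {} \<and> S_L L a H \<subseteq> A)))"

definition almost_disjoint_family :: "'a set \<Rightarrow> 'a set set \<Rightarrow> bool" where
  "almost_disjoint_family X F \<longleftrightarrow>
     (\<forall>B\<in>F. B \<subseteq> X \<and> B \<approx> X) \<and>
     (\<forall>B\<in>F. \<forall>C\<in>F. B \<noteq> C \<longrightarrow> B \<inter> C \<prec> X)"

abbreviation Npos :: "nat set" where "Npos \<equiv> {1..}"

end

theory Submission
  imports Defs "HOL-Analysis.Finite_Cartesian_Product"
begin

definition Qs :: "(nat \<Rightarrow> nat) \<Rightarrow> (nat \<Rightarrow> nat) set set" where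
  "Qs r = {L. finite L \<and> card L \<ge> 1 \<and> L \<subseteq> ({1..r (card L)} \<rightarrow>\<^sub>E Npos)}"

definition wit :: "(nat \<Rightarrow> nat) \<Rightarrow> nat set \<Rightarrow> (nat \<Rightarrow> nat) set \<Rightarrow> nat set \<Rightarrow> bool" where
  "wit r A L W \<longleftrightarrow> (\<exists>a\<in>Npos. \<exists>H. H \<subseteq> {1..r (card L)} \<and> H \<noteq> {} \<and> W = S_L L a H \<and> W \<subseteq> A)"

lemma Qs_countable: "countable (Qs r)"
proof -
  have "Qs r \<subseteq> (\<Union>m. {L. finite L \<and> L \<subseteq> ({1..m} \<rightarrow>\<^sub>E (UNIV::nat set))})"
    unfolding Qs_def by (auto simp: PiE_def Pi_def)
  moreover have "countable (\<Union>m. {L. finite L \<and> L \<subseteq> ({1..m::nat} \<rightarrow>\<^sub>E (UNIV::nat set))})"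
    by (intro countable_UN[of UNIV] countable_Collect_finite_subset countable_PiE) auto
  ultimately show ?thesis using countable_subset by blast
qed

lemma Qs_nonempty: "Qs r \<noteq> {}"
proof -
  have "{(\<lambda>t\<in>{1..r 1}. 1::nat)} \<in> Qs r" unfolding Qs_def by auto
  thus ?thesis by blast
qed

lemma S_L_finite: "finite L \<Longrightarrow> finite (S_L L a H)"
  unfolding S_L_def by (simp add: setcompr_eq_image)

lemma S_L_nonempty: "L \<noteq> {} \<Longrightarrow> S_L L a H \<noteq> {}"
  unfolding S_L_def by auto

lemma rich_big:
  assumes cr: "comb_rich Npos A" and r: "\<forall>n\<ge>1. \<forall>L. L \<subseteq> ({1..r n} \<rightarrow>\<^sub>E Npos) \<and> finite L \<and> card L = n \<longrightarrow>
            (\<exists>a\<in>Npos. \<exists>H. H \<subseteq> {1..r n} \<and> H \<noteq> {} \<and> S_L L a H \<subseteq> A)"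
    and L: "L \<in> Qs r"
  shows "\<exists>W. wit r A L W \<and> (\<forall>z\<in>W. z > c)"
proof -
  define m where "m = r (card L)"
  define sh where "sh = (\<lambda>f::nat\<Rightarrow>nat. \<lambda>t\<in>{1..m}. f t + c)"
  define L' where "L' = sh ` L"
  have LP: "L \<subseteq> ({1..m} \<rightarrow>\<^sub>E Npos)" "finite L" "card L \<ge> 1" using L unfolding Qs_def m_def by auto
  have inj: "inj_on sh L"
  proof
    fix f g assume f: "f \<in> L" and g: "g \<in> L" and e: "sh f = sh g"
    show "f = g"
    proof
      fix t
      show "f t = g t"
      proof (cases "t \<in> {1..m}")
        case True
        then have "sh f t = sh g t" using e by simp
        then show ?thesis using True by (simp add: sh_def)
      next
        case False
        then have "f t = undefined" "g t = undefined" using f g LP(1) by (auto simp: PiE_def extensional_def)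
        then show ?thesis by simp
      qed
    qed
  qed
  have cL': "card L' = card L" unfolding L'_def using inj by (simp add: card_image)
  have L'P: "L' \<subseteq> ({1..r (card L')} \<rightarrow>\<^sub>E Npos)" "finite L'"
  proof -
    have "sh f \<in> ({1..m} \<rightarrow>\<^sub>E Npos)" if "f \<in> L" for f
    proof -
      have "\<And>t. t \<in> {1..m} \<Longrightarrow> f t \<ge> 1" using that LP(1) by (auto dest!: subsetD simp: PiE_iff)
      then show ?thesis unfolding sh_def by (auto simp: PiE_iff intro: trans_le_add1)
    qed
    then show "L' \<subseteq> ({1..r (card L')} \<rightarrow>\<^sub>E Npos)" unfolding cL' m_def[symmetric] unfolding L'_def by (rule image_subsetI)
    show "finite L'" using LP(2) unfolding L'_def by simp
  qed
  obtain a H where a: "a \<in> Npos" and H: "H \<subseteq> {1..m}" "H \<noteq> {}" and S: "S_L L' a H \<subseteq> A"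
    using r[rule_format, of "card L'" L'] L'P cL' LP(3) unfolding m_def by auto
  have fH: "finite H" using H(1) finite_subset by blast
  have cH: "card H \<ge> 1" using fH H(2) by (simp add: Suc_le_eq card_gt_0_iff)
  define a' where "a' = a + c * card H"
  have eq: "a' + (\<Sum>t\<in>H. f t) = a + (\<Sum>t\<in>H. sh f t)" for f
  proof -
    have "(\<Sum>t\<in>H. sh f t) = (\<Sum>t\<in>H. f t + c)" using H(1) by (intro sum.cong) (auto simp: sh_def)
    also have "\<dots> = (\<Sum>t\<in>H. f t) + c * card H" by (simp add: sum.distrib mult.commute)
    finally show ?thesis unfolding a'_def by simp
  qed
  have "S_L L a' H \<subseteq> S_L L' a H"
  proof
    fix z assume "z \<in> S_L L a' H"
    then obtain f where f: "f \<in> L" "z = a' + (\<Sum>t\<in>H. f t)" unfolding S_L_def by blast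
    then have "z = a + (\<Sum>t\<in>H. sh f t)" "sh f \<in> L'" using eq unfolding L'_def by auto
    then show "z \<in> S_L L' a H" unfolding S_L_def by blast
  qed
  then have sub: "S_L L a' H \<subseteq> A" using S by blast
  have big: "\<forall>z\<in>S_L L a' H. z > c"
  proof
    fix z assume "z \<in> S_L L a' H"
    then obtain f where "z = a' + (\<Sum>t\<in>H. f t)" unfolding S_L_def by auto
    moreover have "c * card H \<ge> c" using cH by simp
    moreover have "a \<ge> 1" using a by simp
    ultimately have "z \<ge> a'" "a' > c" unfolding a'_def by linarith+
    then show "z > c" by linarith
  qed
  have "a' \<in> Npos" unfolding a'_def using a by auto
  then have "wit r A L (S_L L a' H)" unfolding wit_def using H sub m_def by blast
  then show ?thesis using big by blast
qed


lemma wit_props: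
  assumes "wit r A L W" "L \<in> Qs r"
  shows "finite W" "W \<noteq> {}" "W \<subseteq> A"
proof -
  obtain a H where W: "W = S_L L a H" "W \<subseteq> A" using assms(1) unfolding wit_def by blast
  have "finite L" "L \<noteq> {}" using assms(2) unfolding Qs_def by auto
  then show "finite W" "W \<noteq> {}" "W \<subseteq> A" using W S_L_finite[of L a H] S_L_nonempty[of L a H] by auto
qed

lemma disjoint_wits:
  fixes q :: "'i \<Rightarrow> (nat \<Rightarrow> nat) set"
  assumes cr: "comb_rich Npos A" and r: "\<forall>n\<ge>1. \<forall>L. L \<subseteq> ({1..r n} \<rightarrow>\<^sub>E Npos) \<and> finite L \<and> card L = n \<longrightarrow>
            (\<exists>a\<in>Npos. \<exists>H. H \<subseteq> {1..r n} \<and> H \<noteq> {} \<and> S_L L a H \<subseteq> A)"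
    and I: "countable I" "I \<noteq> {}" and q: "\<forall>i\<in>I. q i \<in> Qs r"
  shows "\<exists>W. (\<forall>i\<in>I. wit r A (q i) (W i) \<and> finite (W i) \<and> W i \<noteq> {} \<and> W i \<subseteq> A)
          \<and> (\<forall>i\<in>I. \<forall>j\<in>I. i \<noteq> j \<longrightarrow> W i \<inter> W j = {})"
proof -
  define Q where "Q k = q (from_nat_into I k)" for k
  have Q: "Q k \<in> Qs r" for k unfolding Q_def using q from_nat_into[OF I(2)] by blast
  define Wit where "Wit c L = (SOME W. wit r A L W \<and> (\<forall>z\<in>W. z > c))" for c L
  have Wit: "wit r A L (Wit c L) \<and> (\<forall>z\<in>Wit c L. z > c)" if "L \<in> Qs r" for c L
    unfolding Wit_def by (rule someI_ex) (rule rich_big[OF cr r that])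
  define bnd where "bnd = rec_nat 0 (\<lambda>k b. Max (Wit b (Q k)))"
  have b0: "bnd 0 = 0" and bS: "bnd (Suc k) = Max (Wit (bnd k) (Q k))" for k
    unfolding bnd_def by simp_all
  define V where "V k = Wit (bnd k) (Q k)" for k
  have Vw: "wit r A (Q k) (V k)" for k unfolding V_def using Wit[OF Q] by blast
  have Vf: "finite (V k)" "V k \<noteq> {}" "V k \<subseteq> A" for k using wit_props[OF Vw Q] by auto
  have Vr: "bnd k < z \<and> z \<le> bnd (Suc k)" if "z \<in> V k" for k z
    using that Wit[OF Q] Vf[of k] unfolding bS V_def[symmetric] by (auto simp: V_def)
  have bm: "bnd k < bnd (Suc k)" for k
  proof -
    obtain z where "z \<in> V k" using Vf(2) by blast
    then show ?thesis using Vr by fastforce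
  qed
  have bmono: "bnd (Suc j) \<le> bnd k" if "j < k" for j k
  proof -
    have "incseq bnd" using bm by (intro incseq_SucI) (simp add: less_imp_le)
    then show ?thesis using that by (simp add: incseq_def Suc_leI)
  qed
  have Vd: "V j \<inter> V k = {}" if "j \<noteq> k" for j k
  proof -
    have "V j \<inter> V k = {}" if "j < k" for j k
      using Vr[of _ j] Vr[of _ k] bmono[OF that] by fastforce
    then show ?thesis using \<open>j \<noteq> k\<close> by (metis inf_commute linorder_neqE_nat)
  qed
  define W where "W i = V (to_nat_on I i)" for i
  have "Q (to_nat_on I i) = q i" if "i \<in> I" for i unfolding Q_def using I(1) that by simp
  then have "\<forall>i\<in>I. wit r A (q i) (W i) \<and> finite (W i) \<and> W i \<noteq> {} \<and> W i \<subseteq> A"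
    unfolding W_def using Vw Vf by metis
  moreover have "\<forall>i\<in>I. \<forall>j\<in>I. i \<noteq> j \<longrightarrow> W i \<inter> W j = {}"
    unfolding W_def using Vd inj_on_to_nat_on[OF I(1)] by (metis inj_on_eq_iff)
  ultimately show ?thesis by blast
qed

lemma comb_rich_from:
  assumes "B \<subseteq> Npos" "\<forall>n\<ge>1. r n \<ge> 1" "\<forall>L\<in>Qs r. \<exists>W. W \<subseteq> B \<and> wit r X L W"
  shows "comb_rich Npos B"
  unfolding comb_rich_def
proof (intro conjI exI[of _ r] allI impI)
  show "B \<subseteq> Npos" "\<And>n. 1 \<le> n \<Longrightarrow> 1 \<le> r n" using assms by auto
  fix n L assume n: "1 \<le> n" and L: "L \<subseteq> {1..r n} \<rightarrow>\<^sub>E Npos \<and> finite L \<and> card L = n"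
  then have "L \<in> Qs r" unfolding Qs_def by auto
  then obtain W where "W \<subseteq> B" "wit r X L W" using assms(3) by blast
  then show "\<exists>a\<in>Npos. \<exists>H\<subseteq>{1..r n}. H \<noteq> {} \<and> S_L L a H \<subseteq> B" using L unfolding wit_def by blast
qed


theorem theorem3p2:
  fixes A :: "nat set"
  assumes "comb_rich Npos A"
  shows "(\<exists>F. F \<subseteq> Pow A \<and> almost_disjoint_family A F \<and> F \<approx> (UNIV :: nat set set)
              \<and> (\<forall>B\<in>F. comb_rich Npos B))
       \<and> (\<exists>P :: nat \<Rightarrow> nat set. (\<forall>i j. i \<noteq> j \<longrightarrow> P i \<inter> P j = {})
              \<and> (\<Union>i. P i) = A \<and> (\<forall>i. comb_rich Npos (P i)))"
proof -
  obtain r where AS: "A \<subseteq> Npos" and r1: "\<forall>n\<ge>1. r n \<ge> 1" and r: "\<forall>n\<ge>1. \<forall>L. L \<subseteq> ({1..r n} \<rightarrow>\<^sub>E Npos) \<and> finite L \<and> card L = n \<longrightarrow>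
            (\<exists>a\<in>Npos. \<exists>H. H \<subseteq> {1..r n} \<and> H \<noteq> {} \<and> S_L L a H \<subseteq> A)"
    using assms unfolding comb_rich_def by blast
  define e where "e = from_nat_into (Qs r)"
  have e: "e m \<in> Qs r" for m unfolding e_def using from_nat_into[OF Qs_nonempty] by blast
  have esurj: "\<exists>m. e m = L" if "L \<in> Qs r" for L
    unfolding e_def using from_nat_into_surj[OF Qs_countable that] .
  have part1: "\<exists>F. F \<subseteq> Pow A \<and> almost_disjoint_family A F \<and> F \<approx> (UNIV :: nat set set)
              \<and> (\<forall>B\<in>F. comb_rich Npos B)"
  proof -
    define I :: "(nat \<times> nat set) set" where "I = {(m, S) | m S. S \<subseteq> {..<m}}"
    have "I \<subseteq> (\<Union>m. {m} \<times> Pow {..<m})" unfolding I_def by auto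
    moreover have "countable (\<Union>m. {m} \<times> Pow {..<m::nat})"
      by (rule countable_UN[OF countableI_type]) (intro countable_finite; simp)
    ultimately have Ic: "countable I" using countable_subset by blast
    have In: "I \<noteq> {}" unfolding I_def by auto
    have "\<forall>i\<in>I. (e \<circ> fst) i \<in> Qs r" using e by auto
    then obtain W where W: "\<forall>i\<in>I. wit r A (e (fst i)) (W i) \<and> finite (W i) \<and> W i \<noteq> {} \<and> W i \<subseteq> A"
      and Wd: "\<forall>i\<in>I. \<forall>j\<in>I. i \<noteq> j \<longrightarrow> W i \<inter> W j = {}"
      using disjoint_wits[OF assms r Ic In, of "e \<circ> fst"] by auto
    have inI: "(m, x \<inter> {..<m}) \<in> I" for m x unfolding I_def by auto
    define Bf where "Bf x = (\<Union>m. W (m, x \<inter> {..<m}))" for x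
    have BfA: "Bf x \<subseteq> A" for x unfolding Bf_def using W inI by blast
    have Wne: "W (m, x \<inter> {..<m}) \<noteq> {}" for m x using W inI by blast
    have Wfin: "finite (W (m, x \<inter> {..<m}))" for m x using W inI by blast
    have Wdis: "W (m, x \<inter> {..<m}) \<inter> W (m', y \<inter> {..<m'}) = {}"
      if "(m, x \<inter> {..<m}) \<noteq> (m', y \<inter> {..<m'})" for m m' x y using Wd[rule_format, OF inI inI that] .
    have cut: "x \<inter> {..<m} \<noteq> y \<inter> {..<m}" if "(i \<in> x) \<noteq> (i \<in> y)" "i < m" for x y i m
      using that by blast
    have inter: "Bf x \<inter> Bf y \<subseteq> (\<Union>m\<in>{..i}. W (m, x \<inter> {..<m}))" if "(i \<in> x) \<noteq> (i \<in> y)" for x y i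
    proof
      fix z assume "z \<in> Bf x \<inter> Bf y"
      then obtain m1 m2 where z: "z \<in> W (m1, x \<inter> {..<m1})" "z \<in> W (m2, y \<inter> {..<m2})"
        unfolding Bf_def by blast
      then have "(m1, x \<inter> {..<m1}) = (m2, y \<inter> {..<m2})" using Wdis by blast
      then have "m1 \<le> i" using cut[OF that] by (metis not_le prod.inject)
      then show "z \<in> (\<Union>m\<in>{..i}. W (m, x \<inter> {..<m}))" using z by blast
    qed
    have injB: "inj Bf"
    proof
      fix x y assume eq: "Bf x = Bf y"
      show "x = y"
      proof (rule ccontr)
        assume "x \<noteq> y"
        then obtain i where i: "(i \<in> x) \<noteq> (i \<in> y)" by blast
        obtain z where z: "z \<in> W (Suc i, x \<inter> {..<Suc i})" using Wne by blast
        then have "z \<in> Bf x \<inter> Bf y" using eq unfolding Bf_def by blast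
        then have "z \<in> (\<Union>m\<in>{..i}. W (m, x \<inter> {..<m}))" using inter[OF i] by blast
        then obtain m where "m \<le> i" "z \<in> W (m, x \<inter> {..<m})" by blast
        then show False using z Wdis[of m x "Suc i" x] by auto
      qed
    qed
    have Binf: "infinite (Bf x)" for x
    proof -
      define g where "g m = (SOME z. z \<in> W (m, x \<inter> {..<m}))" for m
      have g: "g m \<in> W (m, x \<inter> {..<m})" for m unfolding g_def using Wne some_in_eq by metis
      have "inj g"
      proof
        fix m m' assume "g m = g m'"
        then show "m = m'" using g[of m] g[of m'] Wdis[of m x m' x] by auto
      qed
      then have "infinite (range g)" by (rule range_inj_infinite)
      moreover have "range g \<subseteq> Bf x" unfolding Bf_def using g by blast
      ultimately show ?thesis using finite_subset by blast
    qed
    have Ainf: "infinite A" using Binf[of "{}"] BfA[of "{}"] finite_subset by blast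
    have eqA: "Bf x \<approx> A" for x
    proof -
      have "(UNIV::nat set) \<approx> Bf x" unfolding eqpoll_def using bij_betw_from_nat_into[OF countableI_type Binf[of x]] by blast
      moreover have "(UNIV::nat set) \<approx> A" unfolding eqpoll_def using bij_betw_from_nat_into[OF countableI_type Ainf] by blast
      ultimately show ?thesis by (meson eqpoll_sym eqpoll_trans)
    qed
    have crB: "comb_rich Npos (Bf x)" for x
    proof (rule comb_rich_from[OF _ r1])
      show "Bf x \<subseteq> Npos" using BfA AS by blast
      show "\<forall>L\<in>Qs r. \<exists>W'. W' \<subseteq> Bf x \<and> wit r A L W'"
      proof
        fix L assume "L \<in> Qs r"
        then obtain m where m: "e m = L" using esurj by blast
        have "wit r A L (W (m, x \<inter> {..<m}))" using W inI[of m x] m by fastforce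
        moreover have "W (m, x \<inter> {..<m}) \<subseteq> Bf x" unfolding Bf_def by blast
        ultimately show "\<exists>W'. W' \<subseteq> Bf x \<and> wit r A L W'" by blast
      qed
    qed
    have ad: "almost_disjoint_family A (range Bf)"
      unfolding almost_disjoint_family_def
    proof (intro conjI ballI impI)
      fix B assume "B \<in> range Bf"
      then show "B \<subseteq> A" "B \<approx> A" using BfA eqA by auto
    next
      fix B C assume "B \<in> range Bf" "C \<in> range Bf" "B \<noteq> C"
      then obtain x y where xy: "B = Bf x" "C = Bf y" "x \<noteq> y" by blast
      then obtain i where i: "(i \<in> x) \<noteq> (i \<in> y)" by blast
      have "finite (\<Union>m\<in>{..i}. W (m, x \<inter> {..<m}))" using Wfin by blast
      then have "finite (B \<inter> C)" using inter[OF i] xy finite_subset by metis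
      then show "B \<inter> C \<prec> A" using finite_lesspoll_infinite Ainf by blast
    qed
    have "(UNIV::nat set set) \<approx> range Bf" unfolding eqpoll_def using injB by (auto simp: bij_betw_def)
    then have "range Bf \<approx> (UNIV :: nat set set)" by (rule eqpoll_sym)
    then show ?thesis using ad crB BfA by blast
  qed
  have part2: "\<exists>P :: nat \<Rightarrow> nat set. (\<forall>i j. i \<noteq> j \<longrightarrow> P i \<inter> P j = {})
              \<and> (\<Union>i. P i) = A \<and> (\<forall>i. comb_rich Npos (P i))"
  proof -
    have "\<forall>i\<in>(UNIV :: (nat \<times> nat) set). (e \<circ> snd) i \<in> Qs r" using e by auto
    then obtain W where W: "\<forall>i\<in>(UNIV :: (nat \<times> nat) set). wit r A (e (snd i)) (W i) \<and> finite (W i) \<and> W i \<noteq> {} \<and> W i \<subseteq> A"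
      and Wd: "\<forall>i\<in>(UNIV :: (nat \<times> nat) set). \<forall>j\<in>UNIV. i \<noteq> j \<longrightarrow> W i \<inter> W j = {}"
      using disjoint_wits[OF assms r countableI_type UNIV_not_empty, where q="e \<circ> snd"] by auto
    define U where "U i = (\<Union>m. W (i, m))" for i
    have UA: "U i \<subseteq> A" for i unfolding U_def using W by blast
    have Ud: "U i \<inter> U j = {}" if "i \<noteq> j" for i j
    proof -
      have "W (i, m) \<inter> W (j, m') = {}" for m m' using Wd that by auto
      then show ?thesis unfolding U_def by blast
    qed
    define P where "P i = (if i = 0 then U 0 \<union> (A - (\<Union>j. U j)) else U i)" for i
    have Pd: "P i \<inter> P j = {}" if "i \<noteq> j" for i j
    proof -
      have a: "(U 0 \<union> (A - (\<Union>j. U j))) \<inter> U k = {}" if "k \<noteq> 0" for k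
        using Ud[of 0 k] that by blast
      show ?thesis
      proof (cases "i = 0")
        case True
        then show ?thesis using a[of j] \<open>i \<noteq> j\<close> unfolding P_def by simp
      next
        case False
        show ?thesis
        proof (cases "j = 0")
          case True
          then show ?thesis using a[of i] False unfolding P_def by (simp add: Int_commute)
        next
          case F2: False
          then show ?thesis using False Ud[OF \<open>i \<noteq> j\<close>] unfolding P_def by simp
        qed
      qed
    qed
    have PU: "(\<Union>i. P i) = A"
    proof
      show "(\<Union>i. P i) \<subseteq> A" unfolding P_def using UA by auto
      show "A \<subseteq> (\<Union>i. P i)"
      proof
        fix z assume "z \<in> A"
        then have "z \<in> P 0 \<or> (\<exists>j. z \<in> U j)" unfolding P_def by auto
        then show "z \<in> (\<Union>i. P i)"
        proof
          assume "z \<in> P 0" then show ?thesis by blast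
        next
          assume "\<exists>j. z \<in> U j"
          then obtain j where j: "z \<in> U j" by blast
          show ?thesis
          proof (cases "j = 0")
            case True
            then have "z \<in> P 0" using j unfolding P_def by simp
            then show ?thesis by blast
          next
            case False
            then have "z \<in> P j" using j unfolding P_def by simp
            then show ?thesis by blast
          qed
        qed
      qed
    qed
    have "comb_rich Npos (P i)" for i
    proof (rule comb_rich_from[OF _ r1])
      show "P i \<subseteq> Npos" using PU AS by blast
      show "\<forall>L\<in>Qs r. \<exists>W'. W' \<subseteq> P i \<and> wit r A L W'"
      proof
        fix L assume "L \<in> Qs r"
        then obtain m where m: "e m = L" using esurj by blast
        have "wit r A L (W (i, m))" using W m by fastforce
        moreover have "W (i, m) \<subseteq> P i" unfolding P_def U_def by auto
        ultimately show "\<exists>W'. W' \<subseteq> P i \<and> wit r A L W'" by blast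
      qed
    qed
    then show ?thesis using Pd PU by blast
  qed
  show ?thesis using part1 part2 by blast
qed

end
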